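(* There exists a Stackelberg game $(G,L,F)$ such that $\mathcal{X}^{PS}\not\subseteq\mathcal{X}^{CCE}$.
   Context: A finite game is $G=(N,\{S_p\}_{p\in N},\{u_p\}_{p\in N})$ with players $N=\{1,\dots,n\}$, finite nonempty strategy sets $S_p$, and utilities $u_p:S\to\mathbb{R}$ on $S=\prod_{p\in N}S_p$; write $s=(s_p,s_{-p})$ with $s_{-p}\in S_{-p}=\prod_{q\neq p}S_q$. $\mathcal{X}=\Delta(S)$ is the set of probability distributions on $S$ and $u_p(x)=\sum_{s\in S}x(s)u_p(s)$ for $x\in\mathcal{X}$. For $P\subseteq N$, $\mathcal{X}^{CE}_P$ is the set of $x\in\mathcal{X}$ such that for every $p\in P$ and all $s_p\neq s_p'\in S_p$: $\sum_{s_{-p}\in S_{-p}} x(s_p,s_{-p})\,(u_p(s_p,s_{-p})-u_p(s_p',s_{-p}))\ge 0$; $\mathcal{X}^{CE}=\mathcal{X}^{CE}_N$ is the set of correlated equilibria of $G$. $\mathcal{X}^{CCE}$ is the set of coarse correlated equilibria of $G$: $x\in\mathcal{X}$ with $\sum_{s\in S}x(s)(u_p(s)-u_p(s_p',s_{-p}))\ge 0$ for all $p\in N$, $s_p'\in S_p$. A Stackelberg game (SG) is a triple $(G,L,F)$ with $L\cup F=N$ and $L\cap F=\emptyset$ (leaders and followers). For $P\subseteq N$, $\Pi_P$ is the set of ordered subsets of $P$ (finite sequences of pairwise distinct elements of $P$, including the empty sequence $\varnothing$); for $\pi\in\Pi_P$ and $p\in P$ not occurring in $\pi$, $\pi p$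 is $\pi$ with $p$ appended; when used as a set, $\pi$ means its set of entries. $\mathbf{X}=\prod_{\pi\in\Pi_L}\mathcal{X}^{CE}_{\pi\cup F}$, with elements $\mathbf{x}=[x_\pi]_{\pi\in\Pi_L}$. For $\mathbf{x}\in\mathbf{X}$ and $\pi\in\Pi_L$, $x_\pi$ is stable if $u_p(x_\pi)\ge u_p(x_{\pi p})$ for all $p\in L\setminus\pi$; $\mathbf{x}$ is stable if $x_\varnothing$ is stable, and perfectly stable if $x_\pi$ is stable for every $\pi\in\Pi_L$; $\mathbf{X}^{S}$ and $\mathbf{X}^{PS}$ denote the sets of stable and perfectly stable elements of $\mathbf{X}$. $\mathcal{X}^S=\{x_\varnothing:\mathbf{x}\in\mathbf{X}^S\}$ and $\mathcal{X}^{PS}=\{x_\varnothing:\mathbf{x}\in\mathbf{X}^{PS}\}$ (for the given SG). *)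

theory Defs
  imports Complex_Main "HOL-Library.FuncSet"
begin

definition finite_game :: "nat set \<Rightarrow> (nat \<Rightarrow> nat set) \<Rightarrow> (nat \<Rightarrow> (nat \<Rightarrow> nat) \<Rightarrow> real) \<Rightarrow> bool" where
  "finite_game N S u \<longleftrightarrow> finite N \<and> N \<noteq> {} \<and> (\<forall>p\<in>N. finite (S p) \<and> S p \<noteq> {})"

definition profiles :: "nat set \<Rightarrow> (nat \<Rightarrow> nat set) \<Rightarrow> (nat \<Rightarrow> nat) set" where
  "profiles N S = PiE N S"

definition distributions :: "nat set \<Rightarrow> (nat \<Rightarrow> nat set) \<Rightarrow> ((nat \<Rightarrow> nat) \<Rightarrow> real) set" where
  "distributions N S = {x. (\<forall>s\<in>profiles N S. x s \<ge> 0) \<and> (\<forall>s. s \<notin> profiles N S \<longrightarrow> x s = 0)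
                          \<and> (\<Sum>s\<in>profiles N S. x s) = 1}"

definition exp_util :: "nat set \<Rightarrow> (nat \<Rightarrow> nat set) \<Rightarrow> (nat \<Rightarrow> (nat \<Rightarrow> nat) \<Rightarrow> real) \<Rightarrow> nat \<Rightarrow> ((nat \<Rightarrow> nat) \<Rightarrow> real) \<Rightarrow> real" where
  "exp_util N S u p x = (\<Sum>s\<in>profiles N S. x s * u p s)"

text \<open>X^CE_P: the sum over s_{-p} of x(s_p,s_{-p}) is the sum over profiles s with s p = s_p;
  the profile (s_p', s_{-p}) is s(p := s_p').\<close>
definition CE_P :: "nat set \<Rightarrow> (nat \<Rightarrow> nat set) \<Rightarrow> (nat \<Rightarrow> (nat \<Rightarrow> nat) \<Rightarrow> real) \<Rightarrow> nat set \<Rightarrow> ((nat \<Rightarrow> nat) \<Rightarrow> real) set" where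
  "CE_P N S u P = {x \<in> distributions N S.
     \<forall>p\<in>P. \<forall>sp\<in>S p. \<forall>sp'\<in>S p. sp \<noteq> sp' \<longrightarrow>
       (\<Sum>s\<in>{s\<in>profiles N S. s p = sp}. x s * (u p s - u p (s(p := sp')))) \<ge> 0}"

definition CCE :: "nat set \<Rightarrow> (nat \<Rightarrow> nat set) \<Rightarrow> (nat \<Rightarrow> (nat \<Rightarrow> nat) \<Rightarrow> real) \<Rightarrow> ((nat \<Rightarrow> nat) \<Rightarrow> real) set" where
  "CCE N S u = {x \<in> distributions N S.
     \<forall>p\<in>N. \<forall>sp'\<in>S p. (\<Sum>s\<in>profiles N S. x s * (u p s - u p (s(p := sp')))) \<ge> 0}"

definition ordered_subsets :: "nat set \<Rightarrow> nat list set" where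
  "ordered_subsets P = {\<pi>. distinct \<pi> \<and> set \<pi> \<subseteq> P}"

definition boldX :: "nat set \<Rightarrow> (nat \<Rightarrow> nat set) \<Rightarrow> (nat \<Rightarrow> (nat \<Rightarrow> nat) \<Rightarrow> real) \<Rightarrow> nat set \<Rightarrow> nat set
     \<Rightarrow> (nat list \<Rightarrow> ((nat \<Rightarrow> nat) \<Rightarrow> real)) set" where
  "boldX N S u L F = {xx. \<forall>\<pi>\<in>ordered_subsets L. xx \<pi> \<in> CE_P N S u (set \<pi> \<union> F)}"

definition stable_at :: "nat set \<Rightarrow> (nat \<Rightarrow> nat set) \<Rightarrow> (nat \<Rightarrow> (nat \<Rightarrow> nat) \<Rightarrow> real) \<Rightarrow> nat set
     \<Rightarrow> (nat list \<Rightarrow> ((nat \<Rightarrow> nat) \<Rightarrow> real)) \<Rightarrow> nat list \<Rightarrow> bool" where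
  "stable_at N S u L xx \<pi> \<longleftrightarrow> (\<forall>p\<in>L - set \<pi>. exp_util N S u p (xx \<pi>) \<ge> exp_util N S u p (xx (\<pi> @ [p])))"

definition perfectly_stable :: "nat set \<Rightarrow> (nat \<Rightarrow> nat set) \<Rightarrow> (nat \<Rightarrow> (nat \<Rightarrow> nat) \<Rightarrow> real) \<Rightarrow> nat set
     \<Rightarrow> (nat list \<Rightarrow> ((nat \<Rightarrow> nat) \<Rightarrow> real)) \<Rightarrow> bool" where
  "perfectly_stable N S u L xx \<longleftrightarrow> (\<forall>\<pi>\<in>ordered_subsets L. stable_at N S u L xx \<pi>)"

definition XPS :: "nat set \<Rightarrow> (nat \<Rightarrow> nat set) \<Rightarrow> (nat \<Rightarrow> (nat \<Rightarrow> nat) \<Rightarrow> real) \<Rightarrow> nat set \<Rightarrow> nat set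
     \<Rightarrow> ((nat \<Rightarrow> nat) \<Rightarrow> real) set" where
  "XPS N S u L F = {xx [] | xx. xx \<in> boldX N S u L F \<and> perfectly_stable N S u L xx}"

definition stackelberg_game :: "nat set \<Rightarrow> (nat \<Rightarrow> nat set) \<Rightarrow> (nat \<Rightarrow> (nat \<Rightarrow> nat) \<Rightarrow> real) \<Rightarrow> nat set \<Rightarrow> nat set \<Rightarrow> bool" where
  "stackelberg_game N S u L F \<longleftrightarrow> finite_game N S u \<and> L \<union> F = N \<and> L \<inter> F = {}"

end

theory Submission
  imports Defs
begin

definition gg :: "nat \<Rightarrow> nat \<Rightarrow> nat \<Rightarrow> nat" where
  "gg a b = (\<lambda>i. if i = 0 then a else if i = 1 then b else undefined)"

lemma gg_eq: "gg a b = gg c d \<longleftrightarrow> a = c \<and> b = d"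
proof
  assume h: "gg a b = gg c d"
  have "gg a b 0 = gg c d 0" "gg a b 1 = gg c d 1" using h by simp_all
  thus "a = c \<and> b = d" by (simp add: gg_def)
qed simp

lemma gg_mem: "a \<in> {0,1} \<Longrightarrow> b \<in> {0,1} \<Longrightarrow> gg a b \<in> PiE {0,1} (\<lambda>_. {0::nat,1})"
  unfolding gg_def PiE_def extensional_def by auto

lemma gg_of: "s \<in> PiE {0,1} (\<lambda>_. {0::nat,1}) \<Longrightarrow> s = gg (s 0) (s 1)"
  unfolding gg_def PiE_def extensional_def fun_eq_iff by auto

lemma profA: "s \<in> profiles {0::nat,1} (\<lambda>_. {0::nat,1}) \<Longrightarrow> s 0 \<in> {0,1} \<and> s 1 \<in> {0,1}"
  unfolding profiles_def by auto

lemma profB: "{gg 0 0, gg 0 1, gg 1 0, gg 1 1} \<subseteq> profiles {0,1} (\<lambda>_. {0::nat,1})"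
  unfolding profiles_def using gg_mem by simp

lemma profC: "(a::nat) \<in> {0,1} \<Longrightarrow> (b::nat) \<in> {0,1} \<Longrightarrow> gg a b \<in> {gg 0 0, gg 0 1, gg 1 0, gg 1 1}"
  by auto

lemma profD: "(s::nat\<Rightarrow>nat) = gg (s 0) (s 1) \<Longrightarrow> gg (s 0) (s 1) \<in> X \<Longrightarrow> s \<in> X"
  by (erule ssubst)

lemma prof: "profiles {0,1} (\<lambda>_. {0::nat,1}) = {gg 0 0, gg 0 1, gg 1 0, gg 1 1}"
proof (rule subset_antisym[OF _ profB], rule subsetI)
  fix s assume s: "s \<in> profiles {0::nat,1} (\<lambda>_. {0::nat,1})"
  have e: "s = gg (s 0) (s 1)" using s unfolding profiles_def by (rule gg_of)
  have "s 0 \<in> {0,1} \<and> s 1 \<in> {0,1}" using s by (rule profA)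
  hence "gg (s 0) (s 1) \<in> {gg 0 0, gg 0 1, gg 1 0, gg 1 1}" using profC by blast
  thus "s \<in> {gg 0 0, gg 0 1, gg 1 0, gg 1 1}" using e profD by blast
qed

theorem mainTheorem13:
  shows "\<exists>N S u L F. stackelberg_game N S u L F \<and> \<not> (XPS N S u L F \<subseteq> CCE N S u)"
proof -
  define N :: "nat set" where "N = {0,1}"
  define S :: "nat \<Rightarrow> nat set" where "S = (\<lambda>_. {0,1})"
  define u :: "nat \<Rightarrow> (nat \<Rightarrow> nat) \<Rightarrow> real" where
    "u = (\<lambda>p s. if p = 1 \<and> s 0 = s 1 then 1 else 0)"
  define x0 :: "(nat \<Rightarrow> nat) \<Rightarrow> real" where
    "x0 = (\<lambda>s. if s \<in> profiles N S \<and> s 0 = 0 then 1/2 else 0)"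
  define xu :: "(nat \<Rightarrow> nat) \<Rightarrow> real" where
    "xu = (\<lambda>s. if s \<in> profiles N S then 1/4 else 0)"
  define xx where "xx = (\<lambda>\<pi>::nat list. if \<pi> = [] then x0 else xu)"
  have P: "profiles N S = {gg 0 0, gg 0 1, gg 1 0, gg 1 1}" using prof N_def S_def by simp
  have gv: "gg a b 0 = a" "gg a b 1 = b" "gg a b (Suc 0) = b" for a b by (simp_all add: gg_def)
  have gu: "(gg a b)(0 := c) = gg c b" "(gg a b)(1 := c) = gg a c" "(gg a b)(Suc 0 := c) = gg a c" for a b c
    by (auto simp: gg_def fun_eq_iff)
  have Sv: "S p = {0,1}" for p by (simp add: S_def)
  have Nv: "p \<in> N \<longleftrightarrow> p = 0 \<or> p = 1" for p by (auto simp: N_def)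
  have F1: "{s \<in> profiles N S. s 1 = c} = {gg 0 c, gg 1 c}" if "c \<in> {0,1}" for c
    using that unfolding P by (auto simp: gv)
  have F1': "{s \<in> profiles N S. s (Suc 0) = c} = {gg 0 c, gg 1 c}" if "c \<in> {0,1}" for c
    using F1[OF that] by simp
  have mem: "gg 0 0 \<in> profiles N S" "gg 0 (Suc 0) \<in> profiles N S" "gg (Suc 0) 0 \<in> profiles N S" "gg (Suc 0) (Suc 0) \<in> profiles N S"
    unfolding P by auto
  have F0: "{s \<in> profiles N S. s 0 = c} = {gg c 0, gg c 1}" if "c \<in> {0,1}" for c
    using that unfolding P by (auto simp: gv)
  have SG: "stackelberg_game N S u {1} {0}"
    unfolding stackelberg_game_def finite_game_def N_def S_def by auto
  have d0: "x0 \<in> distributions N S"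
    unfolding distributions_def x0_def P by (simp add: gg_eq gv)
  have du: "xu \<in> distributions N S"
    unfolding distributions_def xu_def P by (simp add: gg_eq gv)
  have ce0: "x0 \<in> CE_P N S u {0}"
    unfolding CE_P_def using d0 by (simp add: u_def)
  have ceu: "xu \<in> CE_P N S u {1, 0}"
    unfolding CE_P_def using du
    apply (simp add: Sv)
    apply (simp add: F0 F1 F1')
    by (auto simp: mem u_def Sv xu_def gg_eq gv gu)
  have bx: "xx \<in> boldX N S u {1} {0}"
    unfolding boldX_def ordered_subsets_def
  proof (intro CollectI ballI)
    fix \<pi> :: "nat list" assume "\<pi> \<in> {\<pi>. distinct \<pi> \<and> set \<pi> \<subseteq> {1}}"
    hence h: "set \<pi> \<subseteq> {1}" by simp
    show "xx \<pi> \<in> CE_P N S u (set \<pi> \<union> {0})"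
    proof (cases "\<pi> = []")
      case True thus ?thesis using ce0 by (simp add: xx_def)
    next
      case False
      hence "set \<pi> = {1}" using h by (metis set_empty subset_singletonD)
      thus ?thesis using ceu False by (simp add: xx_def insert_commute)
    qed
  qed
  have e0: "exp_util N S u 1 x0 = 1/2"
    unfolding exp_util_def P by (simp add: x0_def u_def gg_eq gv mem)
  have eu: "exp_util N S u 1 xu = 1/2"
    unfolding exp_util_def P by (simp add: xu_def u_def gg_eq gv mem)
  have ps: "perfectly_stable N S u {1} xx"
    unfolding perfectly_stable_def ordered_subsets_def
  proof (intro ballI)
    fix \<pi> :: "nat list" assume "\<pi> \<in> {\<pi>. distinct \<pi> \<and> set \<pi> \<subseteq> {1}}"
    hence h: "set \<pi> \<subseteq> {1}" by simp
    show "stable_at N S u {1} xx \<pi>"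
    proof (cases "\<pi> = []")
      case True thus ?thesis unfolding stable_at_def using e0 eu by (simp add: xx_def)
    next
      case False
      hence "set \<pi> = {1}" using h by (metis set_empty subset_singletonD)
      thus ?thesis unfolding stable_at_def by simp
    qed
  qed
  have inX: "x0 \<in> XPS N S u {1} {0}"
  proof -
    have "x0 = xx []" by (simp add: xx_def)
    thus ?thesis unfolding XPS_def using bx ps by blast
  qed
  have neg: "(\<Sum>s\<in>profiles N S. x0 s * (u 1 s - u 1 (s(1 := 0)))) < 0"
    unfolding P by (simp add: x0_def u_def gg_eq gv gu mem)
  have nC: "x0 \<notin> CCE N S u"
  proof
    assume "x0 \<in> CCE N S u"
    hence "\<forall>p\<in>N. \<forall>sp'\<in>S p. (\<Sum>s\<in>profiles N S. x0 s * (u p s - u p (s(p := sp')))) \<ge> 0"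
      unfolding CCE_def by blast
    hence "(\<Sum>s\<in>profiles N S. x0 s * (u 1 s - u 1 (s(1 := 0)))) \<ge> 0"
      using Nv Sv by blast
    thus False using neg by linarith
  qed
  show ?thesis using SG inX nC by blast
qed

end
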